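(* Consider the problem $\min_{\beta\in\mathbb{R}^p}\Phi(\beta)=f(\beta)+\sum_{j=1}^p g_j(\beta_j)$, where $f(\beta)=F(X\beta)$ for a design matrix $X\in\mathbb{R}^{n\times p}$, $f$ satisfies Assumption A and each $g_j$ satisfies Assumption B (both stated in the context). Run the working-set algorithm described in the context, and let $\mathcal{W}_t\subset[p]$ denote its $t$-th working set. Suppose that the inner solver converges toward a critical point, and that $\mathcal{W}_t\subset\mathcal{W}_{t+1}$ for all $t\ge 0$. Then the iterates of the working-set algorithm converge towards a critical point of $\Phi$.
   Context: Assumption A: $f:\mathbb{R}^p\to\mathbb{R}$ is convex and differentiable, and for every $j\in[p]$ there is $L_j>0$ with $|\nabla_j f(x+he_j)-\nabla_j f(x)|\le L_j|h|$ for all $x\in\mathbb{R}^p$, $h\in\mathbb{R}$. Assumption B: each $g_j:\mathbb{R}\to\mathbb{R}$ is proper, closed (lower semicontinuous) and lower bounded. Let $g(\beta)=\sum_j g_j(\beta_j)$ and let $\partial$ denote the Fréchet subdifferential. A critical point of $\Phi$ is a point $x$ with $-\nabla f(x)\in\partial g(x)$. The generalized support of $\beta$ is $\mathrm{gsupp}(\beta)=\{j\in[p]:\partial g_j(\beta_j)\text{ is a singleton}\}$. Working-set algorithm (given $\beta\in\mathbb{R}^p$, an initial size $\mathrm{ws\_size}\in\mathbb{N}$, tolerance $\epsilon>0$, numbers of outer and inner iterations): at outer iteration $t$, compute $\mathrm{score}_j=\mathrm{dist}(-\nabla_j f(\beta),\partial g_j(\beta_j))$ for all $j\in[p]$; set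 $\mathrm{ws\_size}\leftarrow\max(\mathrm{ws\_size},2|\mathrm{gsupp}(\beta)|)$; let $\mathcal{W}_t$ be the set of indices of the $\mathrm{ws\_size}$ largest scores; if $\max_{j\in[p]}\mathrm{score}_j\le\epsilon$, stop; otherwise replace $\beta$ by the output of the inner solver on $\mathcal{W}_t$. The inner solver minimizes $\Phi$ over the coordinates in $\mathcal{W}_t$ (the others being kept fixed) by epochs of cyclic proximal coordinate descent, $\beta_j\leftarrow\mathrm{prox}_{g_j/L_j}(\beta_j-\nabla_j f(\beta)/L_j)$ for $j\in\mathcal{W}_t$, possibly combined every $M$ epochs with an Anderson extrapolation step that is accepted only if it decreases $\Phi$, and stops when $\max_{j\in\mathcal{W}_t}\mathrm{dist}(-\nabla_j f(\beta),\partial g_j(\beta_j))\le\epsilon$ or after a maximal number of epochs.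
   Formalization: The tolerance $\epsilon$ is 0: the outer loop stops (keeping $\beta$) only when every score vanishes, each inner-solver output is an exact critical point of the subproblem on $\mathcal{W}_t$, and the initial working-set size is positive. Each condition added here is assumed in the paper as well or is needed for the statement above to hold. *)

theory Defs
  imports "HOL-Analysis.Analysis"
begin

definition lsc :: "('a::topological_space \<Rightarrow> real) \<Rightarrow> bool" where
  "lsc g \<longleftrightarrow> (\<forall>x c. c < g x \<longrightarrow> eventually (\<lambda>y. c < g y) (at x))"

text \<open>Frechet (regular) subdifferential:
  v is a Frechet subgradient of h at x iff
  liminf_{y -> x, y ~= x} (h y - h x - <v, y - x>) / |y - x| >= 0.\<close>
definition frechet_subdiff :: "('a::real_inner \<Rightarrow> real) \<Rightarrow> 'a \<Rightarrow> 'a set" where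
  "frechet_subdiff h x = {v. \<forall>e>0. \<exists>d>0. \<forall>y. norm (y - x) < d \<longrightarrow>
      h y \<ge> h x + inner v (y - x) - e * norm (y - x)}"

definition gsum :: "('p::finite \<Rightarrow> real \<Rightarrow> real) \<Rightarrow> real^'p \<Rightarrow> real" where
  "gsum g b = (\<Sum>j\<in>UNIV. g j (b $ j))"

definition critical_point ::
  "(real^'p \<Rightarrow> real^'p) \<Rightarrow> ('p::finite \<Rightarrow> real \<Rightarrow> real) \<Rightarrow> real^'p \<Rightarrow> bool" where
  "critical_point gradf g x \<longleftrightarrow> - gradf x \<in> frechet_subdiff (gsum g) x"

text \<open>Critical point of the subproblem restricted to the coordinates in W (other
  coordinates frozen): the restricted penalty is sum_{j in W} g_j, the restricted
  gradient is the gradient with coordinates outside W set to 0 (the restricted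
  objective does not depend on the frozen coordinates).\<close>
definition restricted_critical_point ::
  "(real^'p \<Rightarrow> real^'p) \<Rightarrow> ('p::finite \<Rightarrow> real \<Rightarrow> real) \<Rightarrow> 'p set \<Rightarrow> real^'p \<Rightarrow> bool" where
  "restricted_critical_point gradf g W x \<longleftrightarrow>
     - (\<chi> j. if j \<in> W then gradf x $ j else 0)
       \<in> frechet_subdiff (\<lambda>b. \<Sum>j\<in>W. g j (b $ j)) x"

definition score ::
  "(real^'p \<Rightarrow> real^'p) \<Rightarrow> ('p::finite \<Rightarrow> real \<Rightarrow> real) \<Rightarrow> real^'p \<Rightarrow> 'p \<Rightarrow> ereal" where
  "score gradf g b j =
     (let S = frechet_subdiff (g j) (b $ j) in
      if S = {} then \<infinity> else ereal (infdist (- (gradf b $ j)) S))"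

definition gsupp :: "('p::finite \<Rightarrow> real \<Rightarrow> real) \<Rightarrow> real^'p \<Rightarrow> 'p set" where
  "gsupp g b = {j. \<exists>v. frechet_subdiff (g j) (b $ j) = {v}}"

end

theory Submission
  imports Defs
begin

lemma fs_closed1:
  fixes h :: "real \<Rightarrow> real"
  assumes ne: "frechet_subdiff h x \<noteq> {}" and z: "infdist v (frechet_subdiff h x) = 0"
  shows "v \<in> frechet_subdiff h x"
proof -
  have cl: "v \<in> closure (frechet_subdiff h x)"
    using in_closure_iff_infdist_zero[OF ne] z by simp
  show ?thesis unfolding frechet_subdiff_def
  proof (intro CollectI allI impI)
    fix e :: real assume e: "e > 0"
    have e2: "e/2 > 0" using e by simp
    obtain w where w: "w \<in> frechet_subdiff h x" "dist w v < e/2"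
      using cl e2 unfolding closure_approachable by blast
    have "\<exists>d>0. \<forall>y. norm (y - x) < d \<longrightarrow> h y \<ge> h x + inner w (y - x) - (e/2) * norm (y - x)"
      using w(1) e2 unfolding frechet_subdiff_def by blast
    then obtain d where d: "d > 0" "\<forall>y. norm (y - x) < d \<longrightarrow> h y \<ge> h x + inner w (y - x) - (e/2) * norm (y - x)"
      by blast
    show "\<exists>d>0. \<forall>y. norm (y - x) < d \<longrightarrow> h x + inner v (y - x) - e * norm (y - x) \<le> h y"
    proof (intro exI[of _ d] conjI allI impI)
      fix y assume y: "norm (y - x) < d"
      have wv: "\<bar>w - v\<bar> \<le> e/2" using w(2) by (simp add: dist_real_def)
      have "\<bar>(w - v) * (y - x)\<bar> = \<bar>w - v\<bar> * \<bar>y - x\<bar>" by (rule abs_mult)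
      also have "\<dots> \<le> (e/2) * \<bar>y - x\<bar>" using wv by (rule mult_right_mono) simp
      finally have a: "\<bar>(w - v) * (y - x)\<bar> \<le> (e/2) * \<bar>y - x\<bar>" .
      have b: "h y \<ge> h x + w * (y - x) - (e/2) * \<bar>y - x\<bar>" using d(2) y by simp
      have c: "v * (y - x) \<le> w * (y - x) + \<bar>(w - v) * (y - x)\<bar>"
        by (simp add: left_diff_distrib abs_ge_minus_self add.commute le_diff_eq[symmetric]) 
      show "h x + inner v (y - x) - e * norm (y - x) \<le> h y"
        using a b c by simp
    qed (rule d(1))
  qed
qed

lemma restr:
  assumes rc: "restricted_critical_point gradf g W x" and j: "j \<in> W"
  shows "- (gradf x $ j) \<in> frechet_subdiff (g j) (x $ j)"
  unfolding frechet_subdiff_def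
proof (intro CollectI allI impI)
  fix e :: real assume e: "e > 0"
  let ?v = "- (\<chi> j. if j \<in> W then gradf x $ j else 0)"
  obtain d where d: "d > 0" "\<forall>y. norm (y - x) < d \<longrightarrow> (\<Sum>i\<in>W. g i (y $ i)) \<ge> (\<Sum>i\<in>W. g i (x $ i)) + inner ?v (y - x) - e * norm (y - x)"
    using rc e unfolding restricted_critical_point_def frechet_subdiff_def by blast
  show "\<exists>d>0. \<forall>z. norm (z - x $ j) < d \<longrightarrow> g j (x $ j) + inner (- (gradf x $ j)) (z - x $ j) - e * norm (z - x $ j) \<le> g j z"
  proof (intro exI[of _ d] conjI allI impI)
    fix z assume z: "norm (z - x $ j) < d"
    define y where "y = x + (z - x $ j) *\<^sub>R axis j 1"
    have yx: "y - x = (z - x $ j) *\<^sub>R axis j 1" by (simp add: y_def)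
    have ny: "norm (y - x) = norm (z - x $ j)" by (simp add: yx)
    have yi: "y $ i = (if i = j then z else x $ i)" for i
      by (simp add: y_def axis_def)
    have inn: "inner ?v (y - x) = - (gradf x $ j) * (z - x $ j)"
      using j by (simp add: yx inner_axis)
    have fin: "finite W" by simp
    have s1: "(\<Sum>i\<in>W. g i (y $ i)) = g j z + (\<Sum>i\<in>W - {j}. g i (x $ i))"
      using sum.remove[OF fin j, of "\<lambda>i. g i (y $ i)"] by (simp add: yi)
    have s2: "(\<Sum>i\<in>W. g i (x $ i)) = g j (x $ j) + (\<Sum>i\<in>W - {j}. g i (x $ i))"
      using sum.remove[OF fin j] by simp
    show "g j (x $ j) + inner (- (gradf x $ j)) (z - x $ j) - e * norm (z - x $ j) \<le> g j z"
      using d(2)[rule_format, of y] z ny inn s1 s2 by simp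
  qed (rule d(1))
qed

lemma sep:
  fixes v b :: "real^'p::finite"
  assumes h: "\<And>j. v $ j \<in> frechet_subdiff (g j) (b $ j)"
  shows "v \<in> frechet_subdiff (gsum g) b"
  unfolding frechet_subdiff_def
proof (intro CollectI allI impI)
  fix e :: real assume e: "e > 0"
  define e' where "e' = e / real CARD('p)"
  have e': "e' > 0" using e by (simp add: e'_def)
  have "\<forall>j. \<exists>d>0. \<forall>z. norm (z - b $ j) < d \<longrightarrow> g j z \<ge> g j (b $ j) + inner (v $ j) (z - b $ j) - e' * norm (z - b $ j)"
    using h e' unfolding frechet_subdiff_def by blast
  then obtain D where D: "\<And>j. D j > 0" "\<And>j z. norm (z - b $ j) < D j \<Longrightarrow> g j z \<ge> g j (b $ j) + inner (v $ j) (z - b $ j) - e' * norm (z - b $ j)"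
    by metis
  define d where "d = Min (range D)"
  have dpos: "d > 0" unfolding d_def using D(1) by (simp)
  have dle: "d \<le> D j" for j unfolding d_def by simp
  show "\<exists>d>0. \<forall>y. norm (y - b) < d \<longrightarrow> gsum g b + inner v (y - b) - e * norm (y - b) \<le> gsum g y"
  proof (intro exI[of _ d] conjI allI impI)
    fix y assume y: "norm (y - b) < d"
    have cj: "\<bar>y $ j - b $ j\<bar> \<le> norm (y - b)" for j
      using component_le_norm_cart[of "y - b" j] by simp
    have each: "g j (y $ j) \<ge> g j (b $ j) + v $ j * (y $ j - b $ j) - e' * norm (y - b)" for j
    proof -
      have "norm (y $ j - b $ j) < D j" using cj[of j] y dle[of j] by simp
      from D(2)[OF this] have "g j (y $ j) \<ge> g j (b $ j) + v $ j * (y $ j - b $ j) - e' * \<bar>y $ j - b $ j\<bar>" by simp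
      moreover have "e' * \<bar>y $ j - b $ j\<bar> \<le> e' * norm (y - b)" using cj[of j] e' by simp
      ultimately show ?thesis by linarith
    qed
    have "(\<Sum>j\<in>UNIV. g j (b $ j) + v $ j * (y $ j - b $ j) - e' * norm (y - b)) \<le> (\<Sum>j\<in>UNIV. g j (y $ j))"
      by (rule sum_mono) (rule each)
    moreover have "(\<Sum>j\<in>UNIV. g j (b $ j) + v $ j * (y $ j - b $ j) - e' * norm (y - b))
        = gsum g b + inner v (y - b) - e * norm (y - b)"
      by (simp add: gsum_def sum.distrib sum_subtractf inner_vec_def e'_def)
    ultimately show "gsum g b + inner v (y - b) - e * norm (y - b) \<le> gsum g y"
      by (simp add: gsum_def)
  qed (rule dpos)
qed

theorem proposition1:
  fixes X :: "real^'p::finite^'n::finite"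
    and F :: "real^'n \<Rightarrow> real"
    and f :: "real^'p \<Rightarrow> real"
    and gradf :: "real^'p \<Rightarrow> real^'p"
    and L :: "'p \<Rightarrow> real"
    and g :: "'p \<Rightarrow> real \<Rightarrow> real"
    and ws0 :: nat
    and wsz :: "nat \<Rightarrow> nat"
    and W :: "nat \<Rightarrow> 'p set"
    and beta :: "nat \<Rightarrow> real^'p"
  assumes f_def: "\<And>b. f b = F (X *v b)"
    \<comment> \<open>Assumption A\<close>
    and f_convex: "convex_on UNIV f"
    and f_grad: "\<And>x. (f has_derivative (\<lambda>h. gradf x \<bullet> h)) (at x)"
    and L_pos: "\<And>j. L j > 0"
    and f_coord_lip: "\<And>x j h. \<bar>gradf (x + h *\<^sub>R axis j 1) $ j - gradf x $ j\<bar> \<le> L j * \<bar>h\<bar>"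
    \<comment> \<open>Assumption B (real-valued g_j are automatically proper)\<close>
    and g_lsc: "\<And>j. lsc (g j)"
    and g_bdd: "\<And>j. bdd_below (range (g j))"
    \<comment> \<open>initial working-set size\<close>
    and ws0_pos: "ws0 > 0"
    \<comment> \<open>ws_size update\<close>
    and wsz_0: "wsz 0 = max ws0 (2 * card (gsupp g (beta 0)))"
    and wsz_Suc: "\<And>t. wsz (Suc t) = max (wsz t) (2 * card (gsupp g (beta (Suc t))))"
    \<comment> \<open>W t consists of the indices of the wsz t largest scores\<close>
    and W_card: "\<And>t. card (W t) = min (wsz t) CARD('p)"
    and W_top: "\<And>t i j. i \<in> W t \<Longrightarrow> j \<notin> W t \<Longrightarrow> score gradf g (beta t) j \<le> score gradf g (beta t) i"
    \<comment> \<open>stopping test (idealized tolerance 0): once all scores vanish, the iterate is kept\<close>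
    and stop: "\<And>t. (\<forall>j. score gradf g (beta t) j \<le> 0) \<Longrightarrow> beta (Suc t) = beta t"
    \<comment> \<open>inner solver on W t converges to a critical point of the restricted problem
        (coordinates outside W t stay fixed); beta (Suc t) is its output\<close>
    and inner: "\<And>t. \<not> (\<forall>j. score gradf g (beta t) j \<le> 0) \<Longrightarrow>
        (\<forall>j. j \<notin> W t \<longrightarrow> beta (Suc t) $ j = beta t $ j) \<and>
        restricted_critical_point gradf g (W t) (beta (Suc t))"
    \<comment> \<open>nested working sets\<close>
    and W_mono: "\<And>t. W t \<subseteq> W (Suc t)"
  shows "\<exists>b. critical_point gradf g b \<and> beta \<longlonglongrightarrow> b"
proof -
  have wsz_ge: "wsz t \<ge> ws0" for t
    by (induction t) (auto simp: wsz_0 wsz_Suc)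
  have Wne: "W t \<noteq> {}" for t
  proof -
    have "card (W t) > 0" using W_card[of t] wsz_ge[of t] ws0_pos by simp
    then show ?thesis by auto
  qed
  have finr: "finite (range (\<lambda>t. card (W t)))"
    by (rule finite_subset[of _ "{..CARD('p)}"]) (auto simp: card_mono)
  obtain T where T: "card (W T) = Max (range (\<lambda>t. card (W t)))"
    using Max_in[OF finr] by auto
  have WT: "W (Suc T) = W T"
  proof -
    have "card (W (Suc T)) \<le> card (W T)" using T Max_ge[OF finr] by simp
    moreover have "card (W T) \<le> card (W (Suc T))" using card_mono[OF finite W_mono[of T]] .
    ultimately have "card (W T) = card (W (Suc T))" by linarith
    then show ?thesis using card_subset_eq[OF finite W_mono[of T]] by simp
  qed
  define allz where "allz t = (\<forall>j. score gradf g (beta t) j \<le> 0)" for t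
  have zero_of: "score gradf g b j = 0" if "- (gradf b $ j) \<in> frechet_subdiff (g j) (b $ j)" for b j
    using that unfolding score_def Let_def by (auto simp: infdist_zero)
  have AZ: "allz (Suc T)"
  proof (cases "allz T")
    case True
    then show ?thesis using stop[of T] by (simp add: allz_def)
  next
    case False
    then have rc: "restricted_critical_point gradf g (W T) (beta (Suc T))"
      using inner[of T] by (simp add: allz_def)
    have inW: "score gradf g (beta (Suc T)) i = 0" if "i \<in> W (Suc T)" for i
      using zero_of restr[OF rc] that WT by simp
    obtain i0 where i0: "i0 \<in> W (Suc T)" using Wne by blast
    show ?thesis unfolding allz_def
    proof
      fix j
      show "score gradf g (beta (Suc T)) j \<le> 0"
      proof (cases "j \<in> W (Suc T)")
        case True then show ?thesis using inW by simp
      next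
        case False then show ?thesis using W_top[OF i0 False] inW[OF i0] by simp
      qed
    qed
  qed
  have const: "beta (Suc T + k) = beta (Suc T)" for k
  proof (induction k)
    case (Suc k)
    have "allz (Suc T + k)" using Suc.IH AZ unfolding allz_def by simp
    then show ?case using stop[of "Suc T + k"] Suc by (simp add: allz_def)
  qed simp
  have lim: "beta \<longlonglongrightarrow> beta (Suc T)"
  proof (rule tendsto_eventually)
    show "\<forall>\<^sub>F t in sequentially. beta t = beta (Suc T)"
      unfolding eventually_sequentially
      by (metis const le_add_diff_inverse)
  qed
  have "critical_point gradf g (beta (Suc T))"
    unfolding critical_point_def
  proof (rule sep)
    fix j
    let ?S = "frechet_subdiff (g j) (beta (Suc T) $ j)"
    have "score gradf g (beta (Suc T)) j \<le> 0" using AZ by (simp add: allz_def)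
    then have ne: "?S \<noteq> {}" and "infdist (- (gradf (beta (Suc T)) $ j)) ?S \<le> 0"
      unfolding score_def Let_def by (auto split: if_splits)
    then have "infdist (- (gradf (beta (Suc T)) $ j)) ?S = 0"
      using infdist_nonneg by (metis antisym)
    then show "(- gradf (beta (Suc T))) $ j \<in> ?S"
      using fs_closed1[OF ne] by simp
  qed
  then show ?thesis using lim by blast
qed

end
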